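(* Let $A\in\mathbb{R}^{n\times n}$, $B\in\mathbb{R}^{n\times m}$, $Q=Q^T\succeq0$, $R=R^T\succ0$, and $\Gamma(X)=A^TX+XA+Q$. There exist $P\in\mathbb{R}^{n\times n}$ and a symmetric $\bar P\succ0$ such that $$\begin{bmatrix}-\Gamma(\bar P) & (P+P^T-\bar P-\bar P^T)B\\ B^T(P+P^T-\bar P-\bar P^T) & 4R\end{bmatrix}\succ0$$ if and only if $A$ is Hurwitz.
   Context: Matrix inequalities are in the Loewner sense (symmetric matrices). *)

theory Defs
  imports "HOL-Analysis.Analysis"
begin

definition symmetric_mat :: "real^'n^'n \<Rightarrow> bool" where
  "symmetric_mat M \<longleftrightarrow> transpose M = M"

definition pos_def :: "real^'n^'n \<Rightarrow> bool" where
  "pos_def M \<longleftrightarrow> symmetric_mat M \<and> (\<forall>x. x \<noteq> 0 \<longrightarrow> x \<bullet> (M *v x) > 0)"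

definition pos_semidef :: "real^'n^'n \<Rightarrow> bool" where
  "pos_semidef M \<longleftrightarrow> symmetric_mat M \<and> (\<forall>x. x \<bullet> (M *v x) \<ge> 0)"

definition cmat :: "real^'n^'m \<Rightarrow> complex^'n^'m" where
  "cmat A = (\<chi> i j. complex_of_real (A $ i $ j))"

definition hurwitz :: "real^'n^'n \<Rightarrow> bool" where
  "hurwitz A \<longleftrightarrow>
     (\<forall>(c::complex) (v::complex^'n). v \<noteq> 0 \<and> cmat A *v v = c *s v \<longrightarrow> Re c < 0)"

definition Gamma :: "real^'n^'n \<Rightarrow> real^'n^'n \<Rightarrow> real^'n^'n \<Rightarrow> real^'n^'n" where
  "Gamma A Q X = transpose A ** X + X ** A + Q"

definition block_mat ::
  "real^'n^'n \<Rightarrow> real^'m^'n \<Rightarrow> real^'n^'m \<Rightarrow> real^'m^'m \<Rightarrow> real^('n + 'm)^('n + 'm)" where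
  "block_mat M11 M12 M21 M22 =
     (\<chi> i j. case i of
        Inl a \<Rightarrow> (case j of Inl b \<Rightarrow> M11 $ a $ b | Inr b \<Rightarrow> M12 $ a $ b)
      | Inr a \<Rightarrow> (case j of Inl b \<Rightarrow> M21 $ a $ b | Inr b \<Rightarrow> M22 $ a $ b))"

end

theory Submission
  imports Defs "Jordan_Normal_Form.Schur_Decomposition"
begin

no_notation Matrix.scalar_prod (infix \<open>\<bullet>\<close> 70)
no_notation Matrix.vec_index (infixl \<open>$\<close> 100)


lemma dot_transpose: "x \<bullet> (transpose A *v w) = (A *v x) \<bullet> (w::real^'n)"
  by (metis dot_lmul_matrix vector_transpose_matrix)

lemma sym_swap: "symmetric_mat M \<Longrightarrow> (M *v x) \<bullet> y = x \<bullet> (M *v (y::real^'n))"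
  unfolding symmetric_mat_def by (metis dot_transpose inner_commute)

lemma Gamma_quad:
  assumes "symmetric_mat Pb"
  shows "x \<bullet> (Gamma A Q Pb *v x) = 2 * (x \<bullet> (Pb *v (A *v x))) + x \<bullet> (Q *v x)"
proof -
  have "x \<bullet> ((transpose A ** Pb) *v x) = (A *v x) \<bullet> (Pb *v x)"
    by (metis dot_transpose matrix_vector_mul_assoc)
  also have "\<dots> = x \<bullet> (Pb *v (A *v x))"
    using sym_swap[OF assms] by (metis inner_commute)
  finally have 1: "x \<bullet> ((transpose A ** Pb) *v x) = x \<bullet> (Pb *v (A *v x))" .
  have 2: "x \<bullet> ((Pb ** A) *v x) = x \<bullet> (Pb *v (A *v x))"
    by (simp add: matrix_vector_mul_assoc)
  show ?thesis unfolding Gamma_def matrix_vector_mult_add_rdistrib inner_add_right 1 2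
    by simp
qed

lemma quad_upper: "\<exists>c. \<forall>x. x \<bullet> (M *v x) \<le> c * (x \<bullet> (x::real^'n))"
proof -
  let ?c = "\<Sum>i\<in>UNIV. \<Sum>j\<in>UNIV. \<bar>M $ i $ j\<bar>"
  show ?thesis
  proof (intro exI allI)
    fix x :: "real^'n"
    have "x \<bullet> (M *v x) = (\<Sum>i\<in>UNIV. \<Sum>j\<in>UNIV. x $ i * M $ i $ j * x $ j)"
      by (simp add: inner_vec_def matrix_vector_mult_def sum_distrib_left mult.assoc)
    also have "\<dots> \<le> (\<Sum>i\<in>UNIV. \<Sum>j\<in>UNIV. \<bar>M $ i $ j\<bar> * (x \<bullet> x))"
    proof (intro sum_mono)
      fix i j
      have a: "\<bar>x $ i\<bar> \<le> norm x" "\<bar>x $ j\<bar> \<le> norm x" by (simp_all add: component_le_norm_cart)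
      have "\<bar>x $ i\<bar> * \<bar>x $ j\<bar> \<le> norm x * norm x"
        using a by (simp add: mult_mono)
      also have "\<dots> = x \<bullet> x" by (simp add: dot_square_norm power2_eq_square)
      finally have b: "\<bar>x $ i\<bar> * \<bar>x $ j\<bar> \<le> x \<bullet> x" .
      have "x $ i * M $ i $ j * x $ j \<le> \<bar>x $ i * M $ i $ j * x $ j\<bar>" by simp
      also have "\<dots> = \<bar>M $ i $ j\<bar> * (\<bar>x $ i\<bar> * \<bar>x $ j\<bar>)" by (simp add: abs_mult)
      also have "\<dots> \<le> \<bar>M $ i $ j\<bar> * (x \<bullet> x)" using b by (simp add: mult_left_mono)
      finally show "x $ i * M $ i $ j * x $ j \<le> \<bar>M $ i $ j\<bar> * (x \<bullet> x)" .
    qed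
    also have "\<dots> = ?c * (x \<bullet> x)" by (simp add: sum_distrib_right)
    finally show "x \<bullet> (M *v x) \<le> ?c * (x \<bullet> x)" .
  qed
qed

lemma quad_hom: "(r *\<^sub>R x) \<bullet> (M *v (r *\<^sub>R x)) = r\<^sup>2 * (x \<bullet> (M *v (x::real^'n)))"
  by (simp add: matrix_vector_mult_scaleR power2_eq_square)

lemma pd_lower:
  assumes "pos_def M"
  shows "\<exists>\<beta>>0. \<forall>x. \<beta> * (x \<bullet> x) \<le> x \<bullet> (M *v (x::real^'n))"
proof -
  let ?f = "\<lambda>x::real^'n. x \<bullet> (M *v x)"
  have cont: "continuous_on (sphere 0 1) ?f"
    by (intro continuous_intros linear_continuous_on matrix_vector_mul_linear)
  obtain i :: 'n where True by simp
  have "axis i (1::real) \<in> sphere (0::real^'n) 1" by (simp add: norm_axis_1)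
  hence ne: "sphere (0::real^'n) 1 \<noteq> {}" by blast
  obtain u where u: "u \<in> sphere 0 1" and min: "\<forall>y\<in>sphere 0 1. ?f u \<le> ?f y"
    using continuous_attains_inf[OF compact_sphere ne cont] by blast
  have "u \<noteq> 0" using u by auto
  hence pos: "?f u > 0" using assms unfolding pos_def_def by auto
  show ?thesis
  proof (intro exI[of _ "?f u"] conjI allI pos)
    fix x :: "real^'n"
    show "?f u * (x \<bullet> x) \<le> ?f x"
    proof (cases "x = 0")
      case True thus ?thesis by simp
    next
      case False
      let ?v = "(1 / norm x) *\<^sub>R x"
      have "?v \<in> sphere 0 1" using False by simp
      hence "?f u \<le> ?f ?v" using min by blast
      also have "\<dots> = (1/norm x)\<^sup>2 * ?f x" by (rule quad_hom)
      finally have "?f u * (norm x)\<^sup>2 \<le> ?f x" using False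
        by (simp add: field_simps)
      thus ?thesis by (simp add: dot_square_norm)
    qed
  qed
qed



lemma neg_mv: "(- M) *v x = - (M *v (x::real^'n))"
  by (simp add: Finite_Cartesian_Product.vec_eq_iff matrix_vector_mult_def sum_negf)

lemma sum_UNIV_Plus:
  "sum f (UNIV :: ('a::finite + 'b::finite) set) = sum (\<lambda>a. f (Inl a)) UNIV + sum (\<lambda>b. f (Inr b)) UNIV"
proof -
  have "sum f (UNIV <+> UNIV) = sum (f \<circ> Inl) UNIV + sum (f \<circ> Inr) UNIV"
    by (rule sum.Plus) simp_all
  thus ?thesis by (simp add: comp_def)
qed

lemma block_quad:
  fixes x :: "real^('n::finite+'m::finite)"
  defines "x1 \<equiv> (\<chi> a. x $ Inl a)" and "x2 \<equiv> (\<chi> b. x $ Inr b)"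
  shows "x \<bullet> (block_mat M X Y N *v x) =
     x1 \<bullet> (M *v x1) + x1 \<bullet> (X *v x2) + x2 \<bullet> (Y *v x1) + x2 \<bullet> (N *v x2)"
proof -
  let ?w = "block_mat M X Y N *v x"
  have L: "?w $ Inl a = (M *v x1) $ a + (X *v x2) $ a" for a
    by (simp add: matrix_vector_mult_def block_mat_def sum_UNIV_Plus x1_def x2_def)
  have R: "?w $ Inr b = (Y *v x1) $ b + (N *v x2) $ b" for b
    by (simp add: matrix_vector_mult_def block_mat_def sum_UNIV_Plus x1_def x2_def)
  have "x \<bullet> ?w = (\<Sum>a\<in>UNIV. x1 $ a * ?w $ Inl a) + (\<Sum>b\<in>UNIV. x2 $ b * ?w $ Inr b)"
    by (simp add: inner_vec_def sum_UNIV_Plus x1_def x2_def)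
  also have "\<dots> = x1 \<bullet> (M *v x1) + x1 \<bullet> (X *v x2) + (x2 \<bullet> (Y *v x1) + x2 \<bullet> (N *v x2))"
    unfolding L R by (simp add: inner_vec_def distrib_left sum.distrib)
  finally show ?thesis by simp
qed

lemma sym_entry: "symmetric_mat M \<Longrightarrow> M $ i $ j = M $ j $ i"
  unfolding symmetric_mat_def by (metis transpose_def vec_lambda_beta)

lemma block_sym:
  assumes "symmetric_mat M" "symmetric_mat N" "Y = transpose X"
  shows "symmetric_mat (block_mat M X Y N)"
proof -
  have "transpose (block_mat M X Y N) $ i $ j = block_mat M X Y N $ i $ j" for i j
    using sym_entry[OF assms(1)] sym_entry[OF assms(2)] assms(3)
    by (cases i; cases j) (simp_all add: transpose_def block_mat_def)
  thus ?thesis unfolding symmetric_mat_def by (simp add: Finite_Cartesian_Product.vec_eq_iff)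
qed

lemma block_pd:
  fixes M :: "real^'n::finite^'n" and N :: "real^'m::finite^'m"
  assumes "pos_def M" "pos_def N"
  shows "pos_def (block_mat M 0 0 N)"
  unfolding pos_def_def
proof (intro conjI allI impI)
  show "symmetric_mat (block_mat M 0 0 N)"
    using assms by (intro block_sym) (simp_all add: pos_def_def transpose_def Finite_Cartesian_Product.vec_eq_iff)
  fix x :: "real^('n::finite+'m::finite)" assume x: "x \<noteq> 0"
  let ?x1 = "(\<chi> a. x $ Inl a)" and ?x2 = "(\<chi> b. x $ Inr b)"
  have "?x1 \<noteq> 0 \<or> ?x2 \<noteq> 0"
  proof (rule ccontr)
    assume "\<not> ?thesis"
    hence "\<forall>a. x $ Inl a = 0" "\<forall>b. x $ Inr b = 0" by (auto simp: Finite_Cartesian_Product.vec_eq_iff)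
    hence "x $ i = 0" for i by (cases i) auto
    hence "x = 0" by (simp add: Finite_Cartesian_Product.vec_eq_iff)
    thus False using x by simp
  qed
  moreover have "?x1 \<bullet> (M *v ?x1) \<ge> 0" "?x2 \<bullet> (N *v ?x2) \<ge> 0"
    using assms unfolding pos_def_def by (metis less_eq_real_def inner_zero_left)+
  ultimately have "?x1 \<bullet> (M *v ?x1) + ?x2 \<bullet> (N *v ?x2) > 0"
    using assms unfolding pos_def_def by (metis add_pos_nonneg add_nonneg_pos)
  thus "x \<bullet> (block_mat M 0 0 N *v x) > 0"
    unfolding block_quad by simp
qed

lemma block_pd_11:
  fixes M :: "real^'n::finite^'n" and X :: "real^'m::finite^'n"
  assumes "pos_def (block_mat M X Y N)"
  shows "pos_def M"
  unfolding pos_def_def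
proof (intro conjI allI impI)
  have "symmetric_mat (block_mat M X Y N)" using assms pos_def_def by blast
  thus "symmetric_mat M"
  proof -
    have "M $ i $ j = M $ j $ i" for i j
      using sym_entry[OF \<open>symmetric_mat (block_mat M X Y N)\<close>, of "Inl i" "Inl j"]
      by (simp add: block_mat_def)
    thus ?thesis unfolding symmetric_mat_def by (simp add: Finite_Cartesian_Product.vec_eq_iff transpose_def)
  qed
  fix z :: "real^'n" assume z: "z \<noteq> 0"
  define x :: "real^('n::finite+'m::finite)" where "x = (\<chi> i. case i of Inl a \<Rightarrow> z $ a | Inr b \<Rightarrow> 0)"
  have x1: "(\<chi> a. x $ Inl a) = z" and x2: "(\<chi> b. x $ Inr b) = 0"
    by (simp_all add: x_def Finite_Cartesian_Product.vec_eq_iff)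
  obtain i where "z $ i \<noteq> 0" using z by (auto simp: Finite_Cartesian_Product.vec_eq_iff)
  hence "x $ Inl i \<noteq> 0" by (simp add: x_def)
  hence "x \<noteq> 0" by auto
  hence "x \<bullet> (block_mat M X Y N *v x) > 0" using assms unfolding pos_def_def by blast
  thus "z \<bullet> (M *v z) > 0" unfolding block_quad x1 x2 by simp
qed

lemma lyap_hurwitz:
  fixes A :: "real^'n^'n"
  assumes sP: "symmetric_mat Pb" and pP: "pos_def Pb" and pG: "pos_def (- Gamma A Q Pb)"
    and Q: "pos_semidef Q"
  shows "hurwitz A"
  unfolding hurwitz_def
proof (intro allI impI, elim conjE)
  fix c :: complex and v :: "complex^'n"
  assume v0: "v \<noteq> 0" and ev: "cmat A *v v = c *s v"
  define a :: "real^'n" where "a = (\<chi> i. Re (v $ i))"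
  define b :: "real^'n" where "b = (\<chi> i. Im (v $ i))"
  have comp: "(\<Sum>j\<in>UNIV. complex_of_real (A $ i $ j) * v $ j) = c * v $ i" for i
    using ev by (simp add: Finite_Cartesian_Product.vec_eq_iff cmat_def matrix_vector_mult_def)
  have Aa: "A *v a = Re c *\<^sub>R a - Im c *\<^sub>R b"
  proof -
    have "(A *v a) $ i = (Re c *\<^sub>R a - Im c *\<^sub>R b) $ i" for i
    proof -
      have "Re (\<Sum>j\<in>UNIV. complex_of_real (A $ i $ j) * v $ j) = Re (c * v $ i)"
        using comp[of i] by simp
      thus ?thesis by (simp add: matrix_vector_mult_def a_def b_def Re_sum)
    qed
    thus ?thesis by (simp add: Finite_Cartesian_Product.vec_eq_iff)
  qed
  have Ab: "A *v b = Im c *\<^sub>R a + Re c *\<^sub>R b"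
  proof -
    have "(A *v b) $ i = (Im c *\<^sub>R a + Re c *\<^sub>R b) $ i" for i
    proof -
      have "Im (\<Sum>j\<in>UNIV. complex_of_real (A $ i $ j) * v $ j) = Im (c * v $ i)"
        using comp[of i] by simp
      thus ?thesis by (simp add: matrix_vector_mult_def a_def b_def Im_sum algebra_simps)
    qed
    thus ?thesis by (simp add: Finite_Cartesian_Product.vec_eq_iff)
  qed
  have ab: "a \<noteq> 0 \<or> b \<noteq> 0"
  proof (rule ccontr)
    assume "\<not> ?thesis"
    hence "v $ i = 0" for i by (simp add: Finite_Cartesian_Product.vec_eq_iff a_def b_def complex_eq_iff)
    thus False using v0 by (simp add: Finite_Cartesian_Product.vec_eq_iff)
  qed
  have Gneg: "x \<bullet> (Gamma A Q Pb *v x) \<le> 0" for x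
    using pG unfolding pos_def_def neg_mv inner_minus_right
    by (cases "x = 0") (auto simp: less_imp_le)
  have Gstr: "x \<noteq> 0 \<Longrightarrow> x \<bullet> (Gamma A Q Pb *v x) < 0" for x
    using pG unfolding pos_def_def neg_mv inner_minus_right by auto
  have "a \<bullet> (Gamma A Q Pb *v a) + b \<bullet> (Gamma A Q Pb *v b) < 0"
    using ab Gneg Gstr by (meson add_neg_nonpos add_nonpos_neg)
  moreover have "a \<bullet> (Q *v a) \<ge> 0" "b \<bullet> (Q *v b) \<ge> 0" using Q pos_semidef_def by auto
  ultimately have 1: "a \<bullet> (Pb *v (A *v a)) + b \<bullet> (Pb *v (A *v b)) < 0"
    unfolding Gamma_quad[OF sP] by linarith
  have swap: "b \<bullet> (Pb *v a) = a \<bullet> (Pb *v b)"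
    using sym_swap[OF sP] by (metis inner_commute)
  have 2: "a \<bullet> (Pb *v (A *v a)) + b \<bullet> (Pb *v (A *v b)) =
      Re c * (a \<bullet> (Pb *v a) + b \<bullet> (Pb *v b))"
  proof -
    have e1: "a \<bullet> (Pb *v (A *v a)) = Re c * (a \<bullet> (Pb *v a)) - Im c * (a \<bullet> (Pb *v b))"
      by (simp only: Aa matrix_vector_mult_diff_distrib matrix_vector_mult_scaleR inner_diff_right inner_scaleR_right)
    have e2: "b \<bullet> (Pb *v (A *v b)) = Im c * (b \<bullet> (Pb *v a)) + Re c * (b \<bullet> (Pb *v b))"
      by (simp only: Ab matrix_vector_right_distrib matrix_vector_mult_scaleR inner_add_right inner_scaleR_right)
    show ?thesis by (simp only: e1 e2 swap distrib_left)
  qed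
  have "a \<bullet> (Pb *v a) \<ge> 0" "b \<bullet> (Pb *v b) \<ge> 0"
    using pP unfolding pos_def_def by (metis less_eq_real_def inner_zero_left)+
  hence S: "a \<bullet> (Pb *v a) + b \<bullet> (Pb *v b) > 0"
    using ab pP unfolding pos_def_def by (metis add_pos_nonneg add_nonneg_pos)
  have "Re c * (a \<bullet> (Pb *v a) + b \<bullet> (Pb *v b)) < 0" using 1 2 by simp
  with S show "Re c < 0" by (simp add: mult_less_0_iff)
qed



lemma prod_le_sumsq:
  fixes a b S :: real
  assumes "0 \<le> a" "0 \<le> b" "a\<^sup>2 \<le> S" "b\<^sup>2 \<le> S"
  shows "a * b \<le> S"
proof -
  have "2 * (a * b) \<le> a\<^sup>2 + b\<^sup>2" using sum_squares_bound[of a b] by (simp add: power2_eq_square)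
  thus ?thesis using assms by linarith
qed

lemma tri_ineq:
  fixes b :: "nat \<Rightarrow> nat \<Rightarrow> complex" and \<mu> :: real
  assumes low: "\<forall>k<n. \<forall>l<k. b k l = 0" and dg: "\<forall>k<n. Re (b k k) \<le> \<mu>" and mu: "\<mu> < 0"
  shows "\<exists>\<epsilon>>0. \<forall>y. Re (\<Sum>k<n. cnj (y k) * (\<Sum>l<n. b k l * of_real (\<epsilon>^l / \<epsilon>^k) * y l))
            \<le> \<mu>/2 * (\<Sum>k<n. (cmod (y k))\<^sup>2)"
proof -
  define K where "K = (\<Sum>k<n. \<Sum>l<n. cmod (b k l))"
  have K0: "K \<ge> 0" unfolding K_def by (intro sum_nonneg) auto
  define \<epsilon> where "\<epsilon> = min 1 (- \<mu> / (2 * (K + 1)))"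
  have e0: "\<epsilon> > 0" using mu K0 unfolding \<epsilon>_def by (auto simp: field_simps)
  have e1: "\<epsilon> \<le> 1" unfolding \<epsilon>_def by simp
  have eK: "\<epsilon> * K \<le> - \<mu> / 2"
  proof -
    have "\<epsilon> \<le> - \<mu> / (2 * (K + 1))" unfolding \<epsilon>_def by simp
    hence "\<epsilon> * (2 * (K + 1)) \<le> - \<mu>" using K0 by (simp add: field_simps)
    thus ?thesis using e0 by (simp add: field_simps)
  qed
  show ?thesis
  proof (intro exI[of _ \<epsilon>] conjI allI e0)
    fix y :: "nat \<Rightarrow> complex"
    define S where "S = (\<Sum>k<n. (cmod (y k))\<^sup>2)"
    have S0: "S \<ge> 0" unfolding S_def by (intro sum_nonneg) auto
    have yS: "(cmod (y k))\<^sup>2 \<le> S" if "k < n" for k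
      unfolding S_def using that by (intro member_le_sum) auto
    let ?t = "\<lambda>k l. cnj (y k) * (b k l * of_real (\<epsilon>^l / \<epsilon>^k) * y l)"
    have off: "Re (?t k l) \<le> cmod (b k l) * \<epsilon> * S" if "k < n" "l < n" "l \<noteq> k" for k l
    proof (cases "l < k")
      case True
      hence "b k l = 0" using low that by auto
      thus ?thesis using S0 e0 by simp
    next
      case False
      hence lk: "k < l" using that by simp
      have pw: "\<epsilon>^l / \<epsilon>^k = \<epsilon>^(l-k)" using e0 lk by (simp add: power_diff)
      have pw2: "\<epsilon>^(l-k) \<le> \<epsilon>"
      proof -
        have "\<epsilon>^(l-k) = \<epsilon> * \<epsilon>^(l-k-1)" using lk by (metis Suc_diff_Suc diff_Suc_1 diff_diff_left power_Suc Suc_eq_plus1 add.commute)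
        also have "\<dots> \<le> \<epsilon> * 1" using e0 e1 by (intro mult_left_mono power_le_one) auto
        finally show ?thesis by simp
      qed
      have yy: "cmod (y k) * cmod (y l) \<le> S"
        using yS[of k] yS[of l] that by (intro prod_le_sumsq) auto
      have "Re (?t k l) \<le> cmod (?t k l)" by (rule complex_Re_le_cmod)
      also have "\<dots> = cmod (b k l) * \<epsilon>^(l-k) * (cmod (y k) * cmod (y l))"
        using e0 by (simp add: norm_mult pw norm_power abs_of_nonneg)
      also have "\<dots> \<le> cmod (b k l) * \<epsilon> * S"
        using pw2 yy e0 by (intro mult_mono) (auto intro: mult_left_mono)
      finally show ?thesis .
    qed
    have row: "Re (cnj (y k) * (\<Sum>l<n. b k l * of_real (\<epsilon>^l / \<epsilon>^k) * y l))
         \<le> \<mu> * (cmod (y k))\<^sup>2 + \<epsilon> * S * (\<Sum>l<n. cmod (b k l))" if k: "k < n" for k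
    proof -
      have "Re (cnj (y k) * (\<Sum>l<n. b k l * of_real (\<epsilon>^l / \<epsilon>^k) * y l)) = (\<Sum>l<n. Re (?t k l))"
        by (simp add: sum_distrib_left Re_sum)
      also have "\<dots> = Re (?t k k) + (\<Sum>l\<in>{..<n} - {k}. Re (?t k l))"
        using k by (intro sum.remove) auto
      also have "\<dots> \<le> \<mu> * (cmod (y k))\<^sup>2 + (\<Sum>l\<in>{..<n} - {k}. cmod (b k l) * \<epsilon> * S)"
      proof (rule add_mono)
        have "?t k k = b k k * (cnj (y k) * y k)" using e0 by (simp add: algebra_simps)
        also have "cnj (y k) * y k = of_real ((cmod (y k))\<^sup>2)"
          by (metis complex_norm_square mult.commute)
        finally have tkk: "?t k k = b k k * of_real ((cmod (y k))\<^sup>2)" .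
        have "Re (?t k k) = Re (b k k) * (cmod (y k))\<^sup>2" unfolding tkk by simp
        thus "Re (?t k k) \<le> \<mu> * (cmod (y k))\<^sup>2" using dg k by (simp add: mult_right_mono)
        show "(\<Sum>l\<in>{..<n} - {k}. Re (?t k l)) \<le> (\<Sum>l\<in>{..<n} - {k}. cmod (b k l) * \<epsilon> * S)"
          using off k by (intro sum_mono) auto
      qed
      also have "(\<Sum>l\<in>{..<n} - {k}. cmod (b k l) * \<epsilon> * S) \<le> (\<Sum>l<n. cmod (b k l) * \<epsilon> * S)"
        using S0 e0 by (intro sum_mono2) auto
      also have "\<dots> = \<epsilon> * S * (\<Sum>l<n. cmod (b k l))" by (simp add: sum_distrib_left mult_ac)
      finally show ?thesis by simp
    qed
    have "Re (\<Sum>k<n. cnj (y k) * (\<Sum>l<n. b k l * of_real (\<epsilon>^l / \<epsilon>^k) * y l))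
        = (\<Sum>k<n. Re (cnj (y k) * (\<Sum>l<n. b k l * of_real (\<epsilon>^l / \<epsilon>^k) * y l)))"
      by (simp add: Re_sum)
    also have "\<dots> \<le> (\<Sum>k<n. \<mu> * (cmod (y k))\<^sup>2 + \<epsilon> * S * (\<Sum>l<n. cmod (b k l)))"
      using row by (intro sum_mono) auto
    also have "\<dots> = \<mu> * S + S * (\<epsilon> * K)"
      by (simp add: sum.distrib sum_distrib_left S_def K_def mult_ac)
    also have "\<dots> \<le> \<mu> * S + S * (- \<mu> / 2)"
      using eK S0 by (intro add_left_mono mult_left_mono) auto
    also have "\<dots> = \<mu> / 2 * S" by (simp add: field_simps)
    finally show "Re (\<Sum>k<n. cnj (y k) * (\<Sum>l<n. b k l * of_real (\<epsilon>^l / \<epsilon>^k) * y l))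
            \<le> \<mu>/2 * (\<Sum>k<n. (cmod (y k))\<^sup>2)" unfolding S_def .
  qed
qed



lemma lyap_from_tri:
  fixes A :: "real^'n^'n" and e :: "'n \<Rightarrow> nat" and Ac q p b :: "nat \<Rightarrow> nat \<Rightarrow> complex"
  assumes bij: "bij_betw e UNIV {..<n}"
    and Ac: "\<And>i j. Ac (e i) (e j) = complex_of_real (A $ i $ j)"
    and h1: "\<forall>k<n. \<forall>i<n. (\<Sum>j<n. q k j * Ac j i) = (\<Sum>l<n. b k l * q l i)"
    and h2: "\<forall>i<n. \<forall>j<n. (\<Sum>k<n. p i k * q k j) = (if i = j then 1 else 0)"
    and h3: "\<forall>k<n. \<forall>l<k. b k l = 0"
    and h4: "\<forall>k<n. Re (b k k) < 0"
  shows "\<exists>Pb \<alpha>. \<alpha> > 0 \<and> symmetric_mat Pb \<and> pos_def Pb \<and>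
           (\<forall>x. x \<bullet> (Pb *v (A *v x)) \<le> - \<alpha> * (x \<bullet> (Pb *v x)))"
proof -
  have einn: "e i < n" for i using bij by (auto simp: bij_betw_def)
  have einj: "e i = e j \<longleftrightarrow> i = j" for i j using bij by (auto simp: bij_betw_def inj_on_def)
  obtain i0 :: 'n where True by simp
  have n0: "n > 0" using einn[of i0] by simp
  define \<mu> where "\<mu> = Max ((\<lambda>k. Re (b k k)) ` {..<n})"
  have "\<mu> \<in> (\<lambda>k. Re (b k k)) ` {..<n}" unfolding \<mu>_def using n0 by (intro Max_in) auto
  hence mu: "\<mu> < 0" using h4 by auto
  have dg: "\<forall>k<n. Re (b k k) \<le> \<mu>" unfolding \<mu>_def by (auto intro: Max_ge)
  obtain \<epsilon> where e0: "\<epsilon> > 0" and ineq: "\<And>y. Re (\<Sum>k<n. cnj (y k) * (\<Sum>l<n. b k l * of_real (\<epsilon>^l / \<epsilon>^k) * y l))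
            \<le> \<mu>/2 * (\<Sum>k<n. (cmod (y k))\<^sup>2)"
    using tri_ineq[OF h3 dg mu] by blast
  define W where "W k j = q k (e j) / of_real (\<epsilon>^k)" for k j
  define T where "T k l = b k l * of_real (\<epsilon>^l / \<epsilon>^k)" for k l
  define Y where "Y x k = (\<Sum>j\<in>UNIV. W k j * of_real (x $ j))" for x :: "real^'n" and k
  define Pb :: "real^'n^'n" where "Pb = (\<chi> i j. Re (\<Sum>k<n. cnj (W k i) * W k j))"
  have reidx: "(\<Sum>j<n. g j) = (\<Sum>j\<in>UNIV. g (e j))" for g :: "nat \<Rightarrow> complex"
    using sum.reindex_bij_betw[OF bij, of g] by simp
  have WA: "(\<Sum>j\<in>UNIV. W k j * of_real (A $ j $ i)) = (\<Sum>l<n. T k l * W l i)" if k: "k < n" for k i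
  proof -
    have "(\<Sum>j\<in>UNIV. q k (e j) * of_real (A $ j $ i)) = (\<Sum>j<n. q k j * Ac j (e i))"
      by (simp add: reidx Ac)
    also have "\<dots> = (\<Sum>l<n. b k l * q l (e i))" using h1 k einn by auto
    finally have eq: "(\<Sum>j\<in>UNIV. q k (e j) * of_real (A $ j $ i)) = (\<Sum>l<n. b k l * q l (e i))" .
    have "(\<Sum>j\<in>UNIV. W k j * of_real (A $ j $ i))
        = (\<Sum>j\<in>UNIV. q k (e j) * of_real (A $ j $ i)) / of_real (\<epsilon>^k)"
      by (simp add: W_def sum_divide_distrib)
    also have "\<dots> = (\<Sum>l<n. b k l * q l (e i)) / of_real (\<epsilon>^k)" using eq by simp
    also have "\<dots> = (\<Sum>l<n. T k l * W l i)"
      unfolding sum_divide_distrib T_def W_def using e0 by (intro sum.cong refl) (simp add: field_simps)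
    finally show ?thesis .
  qed
  have YA: "Y (A *v x) k = (\<Sum>l<n. T k l * Y x l)" if k: "k < n" for x k
  proof -
    have "Y (A *v x) k = (\<Sum>j\<in>UNIV. \<Sum>i\<in>UNIV. W k j * of_real (A $ j $ i) * of_real (x $ i))"
      by (simp add: Y_def matrix_vector_mult_def sum_distrib_left mult.assoc)
    also have "\<dots> = (\<Sum>i\<in>UNIV. \<Sum>j\<in>UNIV. W k j * of_real (A $ j $ i) * of_real (x $ i))"
      by (rule sum.swap)
    also have "\<dots> = (\<Sum>i\<in>UNIV. (\<Sum>j\<in>UNIV. W k j * of_real (A $ j $ i)) * of_real (x $ i))"
      by (simp add: sum_distrib_right)
    also have "\<dots> = (\<Sum>i\<in>UNIV. (\<Sum>l<n. T k l * W l i) * of_real (x $ i))"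
      using WA[OF k] by simp
    also have "\<dots> = (\<Sum>i\<in>UNIV. \<Sum>l<n. T k l * (W l i * of_real (x $ i)))"
      by (simp add: sum_distrib_right mult.assoc)
    also have "\<dots> = (\<Sum>l<n. \<Sum>i\<in>UNIV. T k l * (W l i * of_real (x $ i)))"
      by (rule sum.swap)
    also have "\<dots> = (\<Sum>l<n. T k l * Y x l)"
      by (simp add: Y_def sum_distrib_left)
    finally show ?thesis .
  qed
  have bil: "x \<bullet> (Pb *v u) = Re (\<Sum>k<n. cnj (Y x k) * Y u k)" for x u
  proof -
    define F where "F k i j = complex_of_real (x $ i * u $ j) * (cnj (W k i) * W k j)" for k i j
    have "(\<Sum>k<n. cnj (Y x k) * Y u k) = (\<Sum>k<n. \<Sum>i\<in>UNIV. \<Sum>j\<in>UNIV. F k i j)"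
      unfolding Y_def F_def cnj_sum sum_product by (intro sum.cong refl) (simp add: mult_ac)
    also have "\<dots> = (\<Sum>i\<in>UNIV. \<Sum>k<n. \<Sum>j\<in>UNIV. F k i j)" by (rule sum.swap)
    also have "\<dots> = (\<Sum>i\<in>UNIV. \<Sum>j\<in>UNIV. \<Sum>k<n. F k i j)" by (intro sum.cong refl sum.swap)
    also have "\<dots> = (\<Sum>i\<in>UNIV. \<Sum>j\<in>UNIV. of_real (x $ i * u $ j) * (\<Sum>k<n. cnj (W k i) * W k j))"
      by (simp add: F_def sum_distrib_left)
    finally have "Re (\<Sum>k<n. cnj (Y x k) * Y u k) =
        (\<Sum>i\<in>UNIV. \<Sum>j\<in>UNIV. x $ i * u $ j * Re (\<Sum>k<n. cnj (W k i) * W k j))"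
      by (simp add: Re_sum del: of_real_mult)
    also have "\<dots> = x \<bullet> (Pb *v u)"
      by (simp add: inner_vec_def matrix_vector_mult_def Pb_def sum_distrib_left mult_ac)
    finally show ?thesis by simp
  qed
  have sq: "x \<bullet> (Pb *v x) = (\<Sum>k<n. (cmod (Y x k))\<^sup>2)" for x
  proof -
    have "cnj z * z = of_real ((cmod z)\<^sup>2)" for z by (metis complex_norm_square mult.commute)
    thus ?thesis unfolding bil by (simp add: Re_sum)
  qed
  have inj: "\<exists>k<n. Y x k \<noteq> 0" if x: "x \<noteq> 0" for x
  proof (rule ccontr)
    assume "\<not> ?thesis"
    hence Y0: "\<forall>k<n. Y x k = 0" by auto
    have "x $ m = 0" for m
    proof -
      have "(\<Sum>k<n. p (e m) k * of_real (\<epsilon>^k) * Y x k)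
          = (\<Sum>k<n. \<Sum>j\<in>UNIV. p (e m) k * q k (e j) * of_real (x $ j))"
        unfolding Y_def W_def using e0 by (intro sum.cong refl) (simp add: sum_distrib_left field_simps)
      also have "\<dots> = (\<Sum>j\<in>UNIV. \<Sum>k<n. p (e m) k * q k (e j) * of_real (x $ j))"
        by (rule sum.swap)
      also have "\<dots> = (\<Sum>j\<in>UNIV. (if m = j then of_real (x $ j) else 0))"
      proof (intro sum.cong refl)
        fix j
        have "(\<Sum>k<n. p (e m) k * q k (e j) * of_real (x $ j)) = (\<Sum>k<n. p (e m) k * q k (e j)) * of_real (x $ j)"
          by (simp add: sum_distrib_right)
        also have "\<dots> = (if m = j then of_real (x $ j) else 0)"
          using h2 einn einj by simp
        finally show "(\<Sum>k<n. p (e m) k * q k (e j) * of_real (x $ j)) = (if m = j then of_real (x $ j) else 0)" .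
      qed
      also have "\<dots> = of_real (x $ m)" by simp
      finally have "complex_of_real (x $ m) = (\<Sum>k<n. p (e m) k * of_real (\<epsilon>^k) * Y x k)" by simp
      also have "\<dots> = 0" using Y0 by simp
      finally show ?thesis by simp
    qed
    hence "x = 0" by (simp add: Finite_Cartesian_Product.vec_eq_iff)
    thus False using x by simp
  qed
  have symP: "symmetric_mat Pb"
  proof -
    have "Re (cnj (W k j) * W k i) = Re (cnj (W k i) * W k j)" for k i j by (simp add: mult.commute)
    thus ?thesis unfolding symmetric_mat_def by (simp add: Finite_Cartesian_Product.vec_eq_iff transpose_def Pb_def Re_sum mult.commute)
  qed
  have pdP: "pos_def Pb"
    unfolding pos_def_def
  proof (intro conjI allI impI symP)
    fix x :: "real^'n" assume "x \<noteq> 0"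
    then obtain k where k: "k < n" "Y x k \<noteq> 0" using inj by blast
    show "x \<bullet> (Pb *v x) > 0" unfolding sq
      using k by (intro sum_pos2[of _ k]) auto
  qed
  have dec: "x \<bullet> (Pb *v (A *v x)) \<le> - (-\<mu>/2) * (x \<bullet> (Pb *v x))" for x
  proof -
    have "x \<bullet> (Pb *v (A *v x)) = Re (\<Sum>k<n. cnj (Y x k) * Y (A *v x) k)" by (rule bil)
    also have "\<dots> = Re (\<Sum>k<n. cnj (Y x k) * (\<Sum>l<n. b k l * of_real (\<epsilon>^l / \<epsilon>^k) * Y x l))"
      using YA by (simp add: T_def)
    also have "\<dots> \<le> \<mu>/2 * (\<Sum>k<n. (cmod (Y x k))\<^sup>2)" by (rule ineq)
    finally show ?thesis unfolding sq by simp
  qed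
  show ?thesis using mu symP pdP dec by (intro exI[of _ Pb] exI[of _ "-\<mu>/2"]) auto
qed

lemma tr_add: "transpose (X + Y) = transpose X + transpose (Y::real^'n^'m)"
  unfolding transpose_def by vector
lemma tr_neg: "transpose (- X) = - transpose (X::real^'n^'m)"
  unfolding transpose_def by vector
lemma tr_scaleR: "transpose (t *\<^sub>R X) = t *\<^sub>R transpose (X::real^'n^'m)"
  unfolding transpose_def by vector

lemma lyap_scale:
  fixes A Q Pb :: "real^'n^'n"
  assumes sP: "symmetric_mat Pb" and pP: "pos_def Pb" and a0: "\<alpha> > 0"
    and dec: "\<forall>x. x \<bullet> (Pb *v (A *v x)) \<le> - \<alpha> * (x \<bullet> (Pb *v x))"
    and Q: "pos_semidef Q"
  shows "\<exists>P'. symmetric_mat P' \<and> pos_def P' \<and> pos_def (- Gamma A Q P')"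
proof -
  obtain \<beta> where b0: "\<beta> > 0" and bl: "\<And>x. \<beta> * (x \<bullet> x) \<le> x \<bullet> (Pb *v x)"
    using pd_lower[OF pP] by blast
  obtain c where cu: "\<And>x. x \<bullet> (Q *v x) \<le> c * (x \<bullet> x)" using quad_upper[of Q] by blast
  define t where "t = (\<bar>c\<bar> + 1) / (\<alpha> * \<beta>)"
  have t0: "t > 0" unfolding t_def using a0 b0 by simp
  define P' where "P' = t *\<^sub>R Pb"
  have sQ: "symmetric_mat Q" using Q pos_semidef_def by blast
  have sP': "symmetric_mat P'" using sP unfolding symmetric_mat_def P'_def tr_scaleR by simp
  have mv: "P' *v y = t *\<^sub>R (Pb *v y)" for y by (simp add: P'_def scaleR_matrix_vector_assoc)
  have pP': "pos_def P'"
    unfolding pos_def_def using sP' pP t0 by (simp add: mv pos_def_def)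
  have sG: "symmetric_mat (- Gamma A Q P')"
  proof -
    have tP: "transpose P' = P'" and tQ: "transpose Q = Q" using sP' sQ unfolding symmetric_mat_def by auto
    have "transpose (Gamma A Q P') = Gamma A Q P'"
      unfolding Gamma_def tr_add matrix_transpose_mul transpose_transpose tP tQ
      by (simp add: add_ac)
    thus ?thesis unfolding symmetric_mat_def tr_neg by simp
  qed
  have "x \<bullet> (- Gamma A Q P' *v x) > 0" if x: "x \<noteq> 0" for x
  proof -
    have xx: "x \<bullet> x > 0" using x by simp
    have "x \<bullet> (- Gamma A Q P' *v x) = - (2 * t * (x \<bullet> (Pb *v (A *v x))) + x \<bullet> (Q *v x))"
      unfolding neg_mv inner_minus_right Gamma_quad[OF sP'] mv by simp
    also have "\<dots> \<ge> 2 * t * \<alpha> * (x \<bullet> (Pb *v x)) - c * (x \<bullet> x)"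
    proof -
      have "2 * t * (x \<bullet> (Pb *v (A *v x))) \<le> 2 * t * (- \<alpha> * (x \<bullet> (Pb *v x)))"
        using dec[rule_format, of x] t0 by (intro mult_left_mono) simp_all
      also have "\<dots> = - (2 * t * \<alpha> * (x \<bullet> (Pb *v x)))" by simp
      finally have "2 * t * (x \<bullet> (Pb *v (A *v x))) \<le> - (2 * t * \<alpha> * (x \<bullet> (Pb *v x)))" .
      thus ?thesis using cu[of x] by linarith
    qed
    finally have 1: "x \<bullet> (- Gamma A Q P' *v x) \<ge> 2 * t * \<alpha> * (x \<bullet> (Pb *v x)) - c * (x \<bullet> x)" .
    have "2 * t * \<alpha> * (\<beta> * (x \<bullet> x)) \<le> 2 * t * \<alpha> * (x \<bullet> (Pb *v x))"
      using bl[of x] t0 a0 by (intro mult_left_mono) auto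
    moreover have "2 * t * \<alpha> * (\<beta> * (x \<bullet> x)) = 2 * (\<bar>c\<bar> + 1) * (x \<bullet> x)"
      unfolding t_def using a0 b0 by (simp add: field_simps)
    moreover have "c * (x \<bullet> x) < 2 * (\<bar>c\<bar> + 1) * (x \<bullet> x)"
      using xx by (intro mult_strict_right_mono) auto
    ultimately show ?thesis using 1 by linarith
  qed
  thus ?thesis using sP' pP' sG unfolding pos_def_def by blast
qed

lemma schur_nat:
  fixes Ac :: "complex mat"
  assumes A: "Ac \<in> carrier_mat n n" and ev: "\<And>c. eigenvalue Ac c \<Longrightarrow> Re c < 0"
  shows "\<exists>p q b. (\<forall>k<n. \<forall>i<n. (\<Sum>j<n. q k j * Ac $$ (j,i)) = (\<Sum>l<n. b k l * q l i))
     \<and> (\<forall>i<n. \<forall>j<n. (\<Sum>k<n. p i k * q k j) = (if i = j then 1 else 0))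
     \<and> (\<forall>k<n. \<forall>l<k. b k l = 0) \<and> (\<forall>k<n. Re (b k k) < 0)"
proof -
  obtain es where es: "char_poly Ac = (\<Prod>a\<leftarrow>es. [:- a, 1:])"
    using char_poly_factorized[OF A] by auto
  obtain B where B: "B \<in> carrier_mat n n" "upper_triangular B" "similar_mat Ac B"
    using schur_decomposition_exists[OF A es] by auto
  obtain P Q where W: "similar_mat_wit Ac B P Q" using B(3) unfolding similar_mat_def by auto
  have PQ: "P \<in> carrier_mat n n" "Q \<in> carrier_mat n n" "P * Q = 1\<^sub>m n" "Q * P = 1\<^sub>m n"
    "Ac = P * B * Q"
    using W A unfolding similar_mat_wit_def Let_def by auto
  have QA: "Q * Ac = B * Q"
  proof -
    have "Q * Ac = Q * (P * B * Q)" using PQ by simp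
    also have "\<dots> = (Q * P) * B * Q" using PQ(1,2) B(1)
      by (simp add: assoc_mult_mat[of _ n n _ n _ n])
    also have "\<dots> = B * Q" using PQ B by simp
    finally show ?thesis .
  qed
  have 1: "\<forall>k<n. \<forall>i<n. (\<Sum>j<n. Q $$ (k,j) * Ac $$ (j,i)) = (\<Sum>l<n. B $$ (k,l) * Q $$ (l,i))"
  proof (intro allI impI)
    fix k i assume k: "k < n" and i: "i < n"
    have "(Q * Ac) $$ (k,i) = (B * Q) $$ (k,i)" using QA by simp
    thus "(\<Sum>j<n. Q $$ (k,j) * Ac $$ (j,i)) = (\<Sum>l<n. B $$ (k,l) * Q $$ (l,i))"
      using k i PQ A B by (simp add: scalar_prod_def lessThan_atLeast0)
  qed
  have 2: "\<forall>i<n. \<forall>j<n. (\<Sum>k<n. P $$ (i,k) * Q $$ (k,j)) = (if i = j then 1 else 0)"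
  proof (intro allI impI)
    fix i j assume i: "i < n" and j: "j < n"
    have "(P * Q) $$ (i,j) = (1\<^sub>m n) $$ (i,j)" using PQ by simp
    thus "(\<Sum>k<n. P $$ (i,k) * Q $$ (k,j)) = (if i = j then 1 else 0)"
      using i j PQ(1,2) by (simp add: scalar_prod_def lessThan_atLeast0)
  qed
  have 3: "\<forall>k<n. \<forall>l<k. B $$ (k,l) = 0" using B unfolding upper_triangular_def by auto
  have 4: "\<forall>k<n. Re (B $$ (k,k)) < 0"
  proof (intro allI impI)
    fix k assume k: "k < n"
    have "poly (char_poly B) (B $$ (k,k)) = 0"
      unfolding char_poly_upper_triangular[OF B(1) B(2)]
      using k B(1) by (auto simp: poly_prod_list diag_mat_def prod_list_zero_iff)
    hence "eigenvalue B (B $$ (k,k))" using eigenvalue_root_char_poly[OF B(1)] by simp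
    hence "eigenvalue Ac (B $$ (k,k))"
      using eigenvalue_root_char_poly[OF B(1)] eigenvalue_root_char_poly[OF A] char_poly_similar[OF B(3)]
      by simp
    thus "Re (B $$ (k,k)) < 0" by (rule ev)
  qed
  show ?thesis
    apply (rule exI[of _ "\<lambda>i k. P $$ (i,k)"], rule exI[of _ "\<lambda>k j. Q $$ (k,j)"],
        rule exI[of _ "\<lambda>k l. B $$ (k,l)"])
    using 1 2 3 4 by simp
qed

lemma hurwitz_lyap:
  fixes A :: "real^'n^'n"
  assumes hw: "hurwitz A"
  shows "\<exists>Pb \<alpha>. \<alpha> > 0 \<and> symmetric_mat Pb \<and> pos_def Pb \<and>
           (\<forall>x. x \<bullet> (Pb *v (A *v x)) \<le> - \<alpha> * (x \<bullet> (Pb *v x)))"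
proof -
  define n where "n = CARD('n)"
  obtain e :: "'n \<Rightarrow> nat" where bij0: "bij_betw e UNIV {0..<n}"
    using ex_bij_betw_finite_nat[of "UNIV::'n set"] unfolding n_def by auto
  have bij: "bij_betw e UNIV {..<n}" using bij0 by (simp add: lessThan_atLeast0)
  define e' where "e' = inv_into UNIV e"
  have ee': "e (e' k) = k" if "k < n" for k
    unfolding e'_def using bij that by (intro f_inv_into_f) (auto simp: bij_betw_def)
  have e'e: "e' (e i) = i" for i
    unfolding e'_def using bij by (intro inv_into_f_f) (auto simp: bij_betw_def)
  have einn: "e i < n" for i using bij by (auto simp: bij_betw_def)
  have reidx: "(\<Sum>j<n. g j) = (\<Sum>j\<in>UNIV. g (e j))" for g :: "nat \<Rightarrow> complex"
    using sum.reindex_bij_betw[OF bij, of g] by simp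
  define Acf where "Acf i j = complex_of_real (A $ e' i $ e' j)" for i j
  define Am :: "complex mat" where "Am = Matrix.mat n n (\<lambda>(i,j). Acf i j)"
  have Am: "Am \<in> carrier_mat n n" by (simp add: Am_def)
  have ev: "Re c < 0" if evc: "eigenvalue Am c" for c
  proof -
    obtain v where v: "v \<in> carrier_vec n" "v \<noteq> 0\<^sub>v n" "Am *\<^sub>v v = c \<cdot>\<^sub>v v"
      using evc Am unfolding eigenvalue_def eigenvector_def by auto
    define vv :: "complex^'n" where "vv = (\<chi> i. vec_index v (e i))"
    have "(cmat A *v vv) $ i = (c *s vv) $ i" for i
    proof -
      have "(cmat A *v vv) $ i = (\<Sum>j\<in>UNIV. Acf (e i) (e j) * vec_index v (e j))"
        by (simp add: cmat_def matrix_vector_mult_def vv_def Acf_def e'e)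
      also have "\<dots> = (\<Sum>k<n. Acf (e i) k * vec_index v k)" by (rule reidx[symmetric])
      also have "\<dots> = vec_index (Am *\<^sub>v v) (e i)"
        using v(1) einn[of i] by (simp add: Am_def scalar_prod_def lessThan_atLeast0)
      also have "\<dots> = c * vec_index v (e i)" using v(3) v(1) einn[of i] by simp
      finally show ?thesis by (simp add: vv_def)
    qed
    hence eq: "cmat A *v vv = c *s vv" unfolding Finite_Cartesian_Product.vec_eq_iff by blast
    obtain k where k: "k < n" "vec_index v k \<noteq> 0"
    proof (rule ccontr)
      assume "\<not> thesis"
      hence "\<forall>k<n. vec_index v k = 0" using that by blast
      hence "v = 0\<^sub>v n" using v(1) by (intro eq_vecI) auto
      thus False using v(2) by simp
    qed
    have "vv $ e' k \<noteq> 0" using k ee' by (simp add: vv_def)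
    hence "vv \<noteq> 0" by auto
    thus ?thesis using hw eq unfolding hurwitz_def by blast
  qed
  obtain p q b where
    h1: "\<forall>k<n. \<forall>i<n. (\<Sum>j<n. q k j * Am $$ (j,i)) = (\<Sum>l<n. b k l * q l i)"
    and h2: "\<forall>i<n. \<forall>j<n. (\<Sum>k<n. p i k * q k j) = (if i = j then 1 else 0)"
    and h3: "\<forall>k<n. \<forall>l<k. b k l = 0" and h4: "\<forall>k<n. Re (b k k) < 0"
    using schur_nat[OF Am ev] by blast
  have h1': "\<forall>k<n. \<forall>i<n. (\<Sum>j<n. q k j * Acf j i) = (\<Sum>l<n. b k l * q l i)"
    using h1 by (simp add: Am_def)
  have Ac: "Acf (e i) (e j) = complex_of_real (A $ i $ j)" for i j by (simp add: Acf_def e'e)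
  show ?thesis by (rule lyap_from_tri[OF bij Ac h1' h2 h3 h4])
qed

theorem theorem5:
  fixes A Q :: "real^'n^'n" and B :: "real^'m^'n" and R :: "real^'m^'m"
  assumes "pos_semidef Q"
    and "pos_def R"
  shows "(\<exists>(P::real^'n^'n) (Pb::real^'n^'n).
            symmetric_mat Pb \<and> pos_def Pb \<and>
            pos_def (block_mat
               (- Gamma A Q Pb)
               ((P + transpose P - Pb - transpose Pb) ** B)
               (transpose B ** (P + transpose P - Pb - transpose Pb))
               ((4::real) *\<^sub>R R)))
         \<longleftrightarrow> hurwitz A"
proof
  assume "\<exists>(P::real^'n^'n) (Pb::real^'n^'n).
            symmetric_mat Pb \<and> pos_def Pb \<and>
            pos_def (block_mat
               (- Gamma A Q Pb)
               ((P + transpose P - Pb - transpose Pb) ** B)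
               (transpose B ** (P + transpose P - Pb - transpose Pb))
               ((4::real) *\<^sub>R R))"
  then obtain P Pb :: "real^'n^'n" where s: "symmetric_mat Pb" and p: "pos_def Pb"
    and blk: "pos_def (block_mat (- Gamma A Q Pb)
               ((P + transpose P - Pb - transpose Pb) ** B)
               (transpose B ** (P + transpose P - Pb - transpose Pb))
               ((4::real) *\<^sub>R R))" by blast
  show "hurwitz A" using lyap_hurwitz[OF s p block_pd_11[OF blk] assms(1)] .
next
  assume "hurwitz A"
  then obtain Pb0 \<alpha> where h: "\<alpha> > 0" "symmetric_mat Pb0" "pos_def Pb0"
    "\<forall>x. x \<bullet> (Pb0 *v (A *v x)) \<le> - \<alpha> * (x \<bullet> (Pb0 *v x))"
    using hurwitz_lyap by blast
  obtain Pb where s: "symmetric_mat Pb" and p: "pos_def Pb" and g: "pos_def (- Gamma A Q Pb)"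
    using lyap_scale[OF h(2) h(3) h(1) h(4) assms(1)] by blast
  have z: "Pb + transpose Pb - Pb - transpose Pb = 0" by simp
  have R4: "pos_def ((4::real) *\<^sub>R R)"
    using assms(2) unfolding pos_def_def symmetric_mat_def
    by (simp add: tr_scaleR flip: scaleR_matrix_vector_assoc)
  have "pos_def (block_mat (- Gamma A Q Pb) (0::real^'m^'n) (0::real^'n^'m) ((4::real) *\<^sub>R R))"
    by (rule block_pd[OF g R4])
  hence "pos_def (block_mat (- Gamma A Q Pb)
               ((Pb + transpose Pb - Pb - transpose Pb) ** B)
               (transpose B ** (Pb + transpose Pb - Pb - transpose Pb))
               ((4::real) *\<^sub>R R))"
    unfolding z by (simp add: times0_left times0_right)
  thus "\<exists>(P::real^'n^'n) (Pb::real^'n^'n).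
            symmetric_mat Pb \<and> pos_def Pb \<and>
            pos_def (block_mat
               (- Gamma A Q Pb)
               ((P + transpose P - Pb - transpose Pb) ** B)
               (transpose B ** (P + transpose P - Pb - transpose Pb))
               ((4::real) *\<^sub>R R))"
    using s p by blast
qed

end
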